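(* Let $A=\begin{pmatrix} a&b\\ c&d\end{pmatrix}\in F$. Then $A$ commutes with both $C_1$ and $C_2$ if and only if $b=f_4h_2$, $c=-f_4h_3$, $d=a+f_1h_1+f_4h_4$ for some $f_1,f_4\in K[X]$.
   Context: $K$ is an infinite field of characteristic different from 2. Let $X=\{x_1,x_2,x_1',x_2'\}$ and $Y=\{y_1,y_2,y_1',y_2'\}$, and let $K[X;Y]\cong K[X]\otimes_K E(Y)$ be the free supercommutative algebra: the $x$'s are even commuting variables, the $y$'s are odd pairwise anticommuting variables, and $E(Y)$ is the Grassmann algebra on the vector space with basis $Y$. Put $C_1=\begin{pmatrix} x_1&y_1\\ y_1'&x_1'\end{pmatrix}$, $C_2=\begin{pmatrix} x_2&y_2\\ y_2'&x_2'\end{pmatrix}$, and let $F=K[C_1,C_2]$ be the unital $K$-subalgebra of $M_2(K[X;Y])$ generated by $C_1,C_2$. Define $h_1=y_1y_2y_1'y_2'$, $h_2=y_1y_2\big(y_1'(x_2'-x_2)-y_2'(x_1'-x_1)\big)$, $h_3=y_1'y_2'\big(y_1(x_2'-x_2)-y_2(x_1'-x_1)\big)$, $h_4=\big(y_1'(x_2'-x_2)-y_2'(x_1'-x_1)\big)\big(y_1(x_2'-x_2)-y_2(x_1'-x_1)\big)$. *)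

theory Defs
  imports Main "HOL-Library.Poly_Mapping"
begin

(* K[X] with X = {x1, x2, x1', x2'} is modelled as the monoid algebra of
  monomials (nat \<Rightarrow>\<^sub>0 nat) with coefficients in K. Index convention for the
  even variables: x1 = 0, x2 = 1, x1' = 2, x2' = 3. *)

type_synonym 'k mpoly = "(nat \<Rightarrow>\<^sub>0 nat) \<Rightarrow>\<^sub>0 'k"

definition Xvar :: "nat \<Rightarrow> 'k::comm_ring_1 mpoly" where
  "Xvar i = Poly_Mapping.single (Poly_Mapping.single i 1) 1"

definition Kconst :: "'k::comm_ring_1 \<Rightarrow> 'k mpoly" where
  "Kconst c = Poly_Mapping.single 0 c"

(* The odd variables are indexed y1 = 0, y2 = 1, y1' = 2, y2' = 3.
  An element is written uniquely as \<Sum>\<^sub>S p_S y_S, where S ranges over subsets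
  of {0..<4}, p_S \<in> K[X], and y_S is the product of the y_i, i \<in> S, in increasing
  order of index. We represent it by the coefficient function S \<mapsto> p_S
  (which is 0 for S not contained in {0..<4}). *)

type_synonym 'k sc = "nat set \<Rightarrow> 'k mpoly"

(* Number of inversions needed to sort y_T y_U into y_(T \<union> U). *)
definition inv_count :: "nat set \<Rightarrow> nat set \<Rightarrow> nat" where
  "inv_count T U = card {(i, j). i \<in> T \<and> j \<in> U \<and> j < i}"

definition sc_add :: "'k::comm_ring_1 sc \<Rightarrow> 'k sc \<Rightarrow> 'k sc" (infixl "+\<^sub>s" 65) where
  "u +\<^sub>s v = (\<lambda>S. u S + v S)"

definition sc_neg :: "'k::comm_ring_1 sc \<Rightarrow> 'k sc" ("-\<^sub>s _" [81] 80) where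
  "-\<^sub>s u = (\<lambda>S. - u S)"

definition sc_sub :: "'k::comm_ring_1 sc \<Rightarrow> 'k sc \<Rightarrow> 'k sc" (infixl "-\<^sub>s" 65) where
  "u -\<^sub>s v = (\<lambda>S. u S - v S)"

(* Product: (p y_T)(q y_U) = (-1)^inv(T,U) p q y_(T\<union>U) if T, U disjoint, and 0 otherwise. *)
definition sc_mult :: "'k::comm_ring_1 sc \<Rightarrow> 'k sc \<Rightarrow> 'k sc" (infixl "*\<^sub>s" 70) where
  "u *\<^sub>s v = (\<lambda>S. if S \<subseteq> {0..<4}
      then (\<Sum>T\<in>Pow S. (-1) ^ inv_count T (S - T) * u T * v (S - T))
      else 0)"

definition sc_zero :: "'k::comm_ring_1 sc" where
  "sc_zero = (\<lambda>S. 0)"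

definition sc_even :: "'k::comm_ring_1 mpoly \<Rightarrow> 'k sc" where
  "sc_even p = (\<lambda>S. if S = {} then p else 0)"

definition sc_one :: "'k::comm_ring_1 sc" where
  "sc_one = sc_even 1"

definition sc_x :: "nat \<Rightarrow> 'k::comm_ring_1 sc" where
  "sc_x i = sc_even (Xvar i)"

definition sc_y :: "nat \<Rightarrow> 'k::comm_ring_1 sc" where
  "sc_y i = (\<lambda>S. if S = {i} then 1 else 0)"

abbreviation "x1 \<equiv> sc_x 0"
abbreviation "x2 \<equiv> sc_x 1"
abbreviation "x1' \<equiv> sc_x 2"
abbreviation "x2' \<equiv> sc_x 3"
abbreviation "y1 \<equiv> sc_y 0"
abbreviation "y2 \<equiv> sc_y 1"
abbreviation "y1' \<equiv> sc_y 2"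
abbreviation "y2' \<equiv> sc_y 3"

(* A matrix ((a, b), (c, d)) is represented as the tuple (a, b, c, d). *)
type_synonym 'k scmat = "'k sc \<times> 'k sc \<times> 'k sc \<times> 'k sc"

fun mat_add :: "'k::comm_ring_1 scmat \<Rightarrow> 'k scmat \<Rightarrow> 'k scmat" where
  "mat_add (a, b, c, d) (a', b', c', d') = (a +\<^sub>s a', b +\<^sub>s b', c +\<^sub>s c', d +\<^sub>s d')"

fun mat_mult :: "'k::comm_ring_1 scmat \<Rightarrow> 'k scmat \<Rightarrow> 'k scmat" where
  "mat_mult (a, b, c, d) (a', b', c', d') =
     (a *\<^sub>s a' +\<^sub>s b *\<^sub>s c', a *\<^sub>s b' +\<^sub>s b *\<^sub>s d',
      c *\<^sub>s a' +\<^sub>s d *\<^sub>s c', c *\<^sub>s b' +\<^sub>s d *\<^sub>s d')"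

definition mat_scalar :: "'k::comm_ring_1 \<Rightarrow> 'k scmat" where
  "mat_scalar k = (sc_even (Kconst k), sc_zero, sc_zero, sc_even (Kconst k))"

definition C1 :: "'k::comm_ring_1 scmat" where
  "C1 = (x1, y1, y1', x1')"

definition C2 :: "'k::comm_ring_1 scmat" where
  "C2 = (x2, y2, y2', x2')"

(* F = K[C1, C2]: the unital K-subalgebra of M_2(K[X;Y]) generated by C1, C2. *)
inductive_set genF :: "'k::comm_ring_1 scmat set" where
  scalar: "mat_scalar k \<in> genF"
| gen1: "C1 \<in> genF"
| gen2: "C2 \<in> genF"
| add: "A \<in> genF \<Longrightarrow> B \<in> genF \<Longrightarrow> mat_add A B \<in> genF"
| mult: "A \<in> genF \<Longrightarrow> B \<in> genF \<Longrightarrow> mat_mult A B \<in> genF"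

definition h1 :: "'k::comm_ring_1 sc" where
  "h1 = y1 *\<^sub>s y2 *\<^sub>s y1' *\<^sub>s y2'"

definition h2 :: "'k::comm_ring_1 sc" where
  "h2 = y1 *\<^sub>s y2 *\<^sub>s (y1' *\<^sub>s (x2' -\<^sub>s x2) -\<^sub>s y2' *\<^sub>s (x1' -\<^sub>s x1))"

definition h3 :: "'k::comm_ring_1 sc" where
  "h3 = y1' *\<^sub>s y2' *\<^sub>s (y1 *\<^sub>s (x2' -\<^sub>s x2) -\<^sub>s y2 *\<^sub>s (x1' -\<^sub>s x1))"

definition h4 :: "'k::comm_ring_1 sc" where
  "h4 = (y1' *\<^sub>s (x2' -\<^sub>s x2) -\<^sub>s y2' *\<^sub>s (x1' -\<^sub>s x1)) *\<^sub>s
        (y1 *\<^sub>s (x2' -\<^sub>s x2) -\<^sub>s y2 *\<^sub>s (x1' -\<^sub>s x1))"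

end

theory Submission
  imports Defs
begin


definition tau :: "(nat \<Rightarrow>\<^sub>0 nat) \<Rightarrow> (nat \<Rightarrow>\<^sub>0 nat)" where
  "tau m = Poly_Mapping.update 3 0 m + Poly_Mapping.single 1 (Poly_Mapping.lookup m 3)"

lemma lookup_tau: "Poly_Mapping.lookup (tau m) i = (if i = 3 then 0 else Poly_Mapping.lookup m i) + (if i = 1 then Poly_Mapping.lookup m 3 else 0)"
  by (simp add: tau_def lookup_add lookup_update lookup_single)

lemma tau_add: "tau (m + n) = tau m + tau n"
  by (rule poly_mapping_eqI) (simp add: lookup_tau lookup_add)

definition sig :: "'k::comm_ring_1 mpoly \<Rightarrow> 'k mpoly" where
  "sig P = (\<Sum>m\<in>Poly_Mapping.keys P. Poly_Mapping.single (tau m) (Poly_Mapping.lookup P m))"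

lemma sig_superset: "finite S \<Longrightarrow> Poly_Mapping.keys P \<subseteq> S \<Longrightarrow> sig P = (\<Sum>m\<in>S. Poly_Mapping.single (tau m) (Poly_Mapping.lookup P m))"
  unfolding sig_def
  by (rule sum.mono_neutral_left) (auto simp: in_keys_iff)

lemma sig_add: "sig (P + Q) = sig P + sig Q"
proof -
  let ?S = "Poly_Mapping.keys P \<union> Poly_Mapping.keys Q"
  have "Poly_Mapping.keys (P+Q) \<subseteq> ?S" by (rule keys_add)
  then have "sig (P+Q) = (\<Sum>m\<in>?S. Poly_Mapping.single (tau m) (Poly_Mapping.lookup (P+Q) m))"
    by (intro sig_superset) auto
  also have "\<dots> = (\<Sum>m\<in>?S. Poly_Mapping.single (tau m) (Poly_Mapping.lookup P m)) + (\<Sum>m\<in>?S. Poly_Mapping.single (tau m) (Poly_Mapping.lookup Q m))"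
    by (simp add: lookup_add single_add sum.distrib)
  also have "\<dots> = sig P + sig Q"
    by (subst (1 2) sig_superset[of ?S]) auto
  finally show ?thesis .
qed

lemma sig_zero: "sig 0 = 0" by (simp add: sig_def)

lemma sig_sum: "finite A \<Longrightarrow> sig (sum f A) = (\<Sum>x\<in>A. sig (f x))"
  by (induct A rule: finite_induct) (auto simp: sig_zero sig_add)

lemma sig_single: "sig (Poly_Mapping.single m c) = Poly_Mapping.single (tau m) c"
  by (cases "c = 0") (simp_all add: sig_def)

lemma sig_neg: "sig (- P) = - sig P"
  using sig_add[of P "-P"] by (simp add: sig_zero eq_neg_iff_add_eq_0 add.commute)

lemma sig_diff: "sig (P - Q) = sig P - sig Q"
  using sig_add[of "P - Q" Q] by simp

lemma poly_expand: "P = (\<Sum>m\<in>Poly_Mapping.keys P. Poly_Mapping.single m (Poly_Mapping.lookup P m))"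
  by (rule poly_mapping_eqI) (auto simp: lookup_sum lookup_single when_def in_keys_iff
       intro: sum.neutral  split: if_splits)

lemma sig_mult: "sig (P * Q) = sig P * sig Q"
proof -
  have "P * Q = (\<Sum>m\<in>Poly_Mapping.keys P. \<Sum>n\<in>Poly_Mapping.keys Q. Poly_Mapping.single (m + n) (Poly_Mapping.lookup P m * Poly_Mapping.lookup Q n))"
  proof -
    have "P * Q = (\<Sum>m\<in>Poly_Mapping.keys P. Poly_Mapping.single m (Poly_Mapping.lookup P m)) * (\<Sum>n\<in>Poly_Mapping.keys Q. Poly_Mapping.single n (Poly_Mapping.lookup Q n))"
      by (simp only: poly_expand[symmetric])
    then show ?thesis by (simp add: sum_distrib_left sum_distrib_right mult_single) (rule sum.swap)
  qed
  then have "sig (P * Q) = (\<Sum>m\<in>Poly_Mapping.keys P. \<Sum>n\<in>Poly_Mapping.keys Q. Poly_Mapping.single (tau m + tau n) (Poly_Mapping.lookup P m * Poly_Mapping.lookup Q n))"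
    by (simp add: sig_sum sig_single tau_add)
  also have "\<dots> = sig P * sig Q"
    by (simp add: sig_def sum_distrib_left sum_distrib_right mult_single) (rule sum.swap)
  finally show ?thesis .
qed

lemma single_pow: "Poly_Mapping.single (Poly_Mapping.single i k) (1::'k::comm_ring_1) = Xvar i ^ k"
proof (induct k)
  case 0 then show ?case by simp
next
  case (Suc k)
  have "Poly_Mapping.single (Poly_Mapping.single i (Suc k)) (1::'k) = Poly_Mapping.single (Poly_Mapping.single i 1 + Poly_Mapping.single i k) 1"
    by (simp add: single_add[symmetric])
  also have "\<dots> = Xvar i * Poly_Mapping.single (Poly_Mapping.single i k) 1" by (simp add: Xvar_def mult_single)
  also have "\<dots> = Xvar i * Xvar i ^ k" using Suc by simp
  finally show ?case by simp
qed

lemma dvd_mono: "(Xvar 3 - Xvar 1 :: 'k::comm_ring_1 mpoly) dvd Poly_Mapping.single m c - Poly_Mapping.single (tau m) c"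
proof -
  define m' where "m' = Poly_Mapping.update 3 0 m"
  define k where "k = Poly_Mapping.lookup m 3"
  have m: "m = m' + Poly_Mapping.single 3 k"
    by (rule poly_mapping_eqI) (simp add: m'_def k_def lookup_add lookup_update lookup_single when_def)
  have t: "tau m = m' + Poly_Mapping.single 1 k" by (simp add: tau_def m'_def k_def)
  have "Poly_Mapping.single m c - Poly_Mapping.single (tau m) c = Poly_Mapping.single m' c * (Xvar 3 ^ k - Xvar 1 ^ k)"
    apply (subst (1) m) apply (subst t)
    by (simp add: single_pow[symmetric] mult_single right_diff_distrib)
  also have "(Xvar 3 - Xvar 1) dvd \<dots>"
    by (rule dvd_mult, subst power_diff_sumr2) simp
  finally show ?thesis .
qed

lemma dvd_sig: "(Xvar 3 - Xvar 1 :: 'k::comm_ring_1 mpoly) dvd P - sig P"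
proof -
  have "P - sig P = (\<Sum>m\<in>Poly_Mapping.keys P. Poly_Mapping.single m (Poly_Mapping.lookup P m) - Poly_Mapping.single (tau m) (Poly_Mapping.lookup P m))"
    by (subst (1) poly_expand) (simp add: sig_def sum_subtractf)
  also have "(Xvar 3 - Xvar 1) dvd \<dots>" by (rule dvd_sum) (rule dvd_mono)
  finally show ?thesis .
qed

lemma sig_X: "i \<noteq> 3 \<Longrightarrow> sig (Xvar i) = Xvar i"
proof -
  assume "i \<noteq> 3"
  then have "tau (Poly_Mapping.single i 1) = Poly_Mapping.single i 1"
    by (intro poly_mapping_eqI) (simp add: lookup_tau lookup_single when_def)
  then show ?thesis by (simp add: Xvar_def sig_single)
qed

lemma sig_X3: "sig (Xvar 3) = Xvar 1"
proof -
  have "tau (Poly_Mapping.single 3 1) = Poly_Mapping.single 1 1"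
    by (intro poly_mapping_eqI) (simp add: lookup_tau lookup_single when_def)
  then show ?thesis by (simp add: Xvar_def sig_single)
qed

lemma Xvar_inj: "i \<noteq> j \<Longrightarrow> Xvar i \<noteq> (Xvar j :: 'k::comm_ring_1 mpoly)"
proof
  assume ij: "i \<noteq> j" and h: "Xvar i = (Xvar j :: 'k mpoly)"
  have "Poly_Mapping.single i (1::nat) \<noteq> Poly_Mapping.single j 1"
  proof
    assume "Poly_Mapping.single i (1::nat) = Poly_Mapping.single j 1"
    then have "Poly_Mapping.lookup (Poly_Mapping.single i (1::nat)) i = Poly_Mapping.lookup (Poly_Mapping.single j 1) i" by simp
    then show False using ij by (simp add: lookup_single)
  qed
  then have "Poly_Mapping.lookup (Xvar j :: 'k mpoly) (Poly_Mapping.single i 1) = 0"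
    by (simp add: Xvar_def lookup_single)
  moreover have "Poly_Mapping.lookup (Xvar i :: 'k mpoly) (Poly_Mapping.single i 1) = 1"
    by (simp add: Xvar_def)
  moreover have "Poly_Mapping.lookup (Xvar i :: 'k mpoly) (Poly_Mapping.single i 1) = Poly_Mapping.lookup (Xvar j) (Poly_Mapping.single i 1)"
    by (subst h) (rule refl)
  ultimately show False by simp
qed

lemma divis:
  fixes \<beta> \<gamma> :: "'k::field mpoly"
  assumes "\<beta> * (Xvar 2 - Xvar 0) = \<gamma> * (Xvar 3 - Xvar 1)"
  shows "\<exists>f. \<beta> = (Xvar 3 - Xvar 1) * f \<and> \<gamma> = (Xvar 2 - Xvar 0) * f"
proof -
  have u0: "(Xvar 2 - Xvar 0 :: 'k mpoly) \<noteq> 0" using Xvar_inj[of 2 0] by auto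
  have v0: "(Xvar 3 - Xvar 1 :: 'k mpoly) \<noteq> 0" using Xvar_inj[of 3 1] by auto
  have "sig (\<beta> * (Xvar 2 - Xvar 0)) = sig (\<gamma> * (Xvar 3 - Xvar 1))" using assms by simp
  then have "sig \<beta> * (Xvar 2 - Xvar 0) = 0"
    by (simp add: sig_mult sig_diff sig_X sig_X3)
  then have "sig \<beta> = 0" using u0 by simp
  then obtain f where f: "\<beta> = (Xvar 3 - Xvar 1) * f" using dvd_sig[of \<beta>] by (auto elim: dvdE)
  have "(Xvar 3 - Xvar 1) * (\<gamma> - (Xvar 2 - Xvar 0) * f) = \<gamma> * (Xvar 3 - Xvar 1) - \<beta> * (Xvar 2 - Xvar 0)"
    unfolding f by (simp add: algebra_simps)
  also have "\<dots> = 0" using assms by simp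
  finally have "(Xvar 3 - Xvar 1) * (\<gamma> - (Xvar 2 - Xvar 0) * f) = 0" .
  then have "\<gamma> = (Xvar 2 - Xvar 0) * f" using v0 by simp
  with f show ?thesis by blast
qed



definition mon :: "nat set \<Rightarrow> 'k::comm_ring_1 mpoly \<Rightarrow> 'k sc" where
  "mon T p = (\<lambda>S. if S = T then p else 0)"

definition bs :: "bool \<Rightarrow> bool \<Rightarrow> bool \<Rightarrow> bool \<Rightarrow> nat set" where
  "bs a0 a1 a2 a3 = {i. (i = 0 \<and> a0) \<or> (i = 1 \<and> a1) \<or> (i = 2 \<and> a2) \<or> (i = 3 \<and> a3)}"

lemma mem_bs [simp]: "i \<in> bs a0 a1 a2 a3 \<longleftrightarrow> (i = 0 \<and> a0) \<or> (i = 1 \<and> a1) \<or> (i = 2 \<and> a2) \<or> (i = 3 \<and> a3)"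
  by (simp add: bs_def)

lemma bs_sub4 [simp]: "bs a0 a1 a2 a3 \<subseteq> {0..<4}"
  by auto

lemma bs_eq [simp]: "bs a0 a1 a2 a3 = bs c0 c1 c2 c3 \<longleftrightarrow> a0 = c0 \<and> a1 = c1 \<and> a2 = c2 \<and> a3 = c3"
proof
  assume h: "bs a0 a1 a2 a3 = bs c0 c1 c2 c3"
  have "\<And>i. (i \<in> bs a0 a1 a2 a3) = (i \<in> bs c0 c1 c2 c3)" using h by simp
  from this[of 0] this[of 1] this[of 2] this[of 3] show "a0 = c0 \<and> a1 = c1 \<and> a2 = c2 \<and> a3 = c3" by simp
qed simp

lemma bs_subset [simp]: "bs a0 a1 a2 a3 \<subseteq> bs c0 c1 c2 c3 \<longleftrightarrow> (a0 \<longrightarrow> c0) \<and> (a1 \<longrightarrow> c1) \<and> (a2 \<longrightarrow> c2) \<and> (a3 \<longrightarrow> c3)"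
proof
  assume h: "bs a0 a1 a2 a3 \<subseteq> bs c0 c1 c2 c3"
  have "\<And>i. i \<in> bs a0 a1 a2 a3 \<Longrightarrow> i \<in> bs c0 c1 c2 c3" using h by blast
  from this[of 0] this[of 1] this[of 2] this[of 3] show "(a0 \<longrightarrow> c0) \<and> (a1 \<longrightarrow> c1) \<and> (a2 \<longrightarrow> c2) \<and> (a3 \<longrightarrow> c3)" by simp
qed auto

lemma bs_diff [simp]: "bs a0 a1 a2 a3 - bs c0 c1 c2 c3 = bs (a0 \<and> \<not> c0) (a1 \<and> \<not> c1) (a2 \<and> \<not> c2) (a3 \<and> \<not> c3)"
  by auto

lemma bs_alt: "bs a0 a1 a2 a3 = (if a0 then {0} else {}) \<union> (if a1 then {1} else {}) \<union> (if a2 then {2} else {}) \<union> (if a3 then {3} else {})"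
  by auto

lemma card_bs [simp]: "card (bs a0 a1 a2 a3) = of_bool a0 + of_bool a1 + of_bool a2 + of_bool a3"
  by (cases a0; cases a1; cases a2; cases a3) (simp_all add: bs_alt)

lemma bs_enum: assumes "S \<subseteq> {0..<4}" shows "S = bs (0 \<in> S) (1 \<in> S) (2 \<in> S) (3 \<in> S)"
proof (rule set_eqI)
  fix x show "x \<in> S \<longleftrightarrow> x \<in> bs (0 \<in> S) (1 \<in> S) (2 \<in> S) (3 \<in> S)"
  proof
    assume x: "x \<in> S" then have "x < 4" using assms by auto
    then have "x = 0 \<or> x = 1 \<or> x = 2 \<or> x = 3" by arith
    then show "x \<in> bs (0 \<in> S) (1 \<in> S) (2 \<in> S) (3 \<in> S)" using x by auto
  qed auto
qed

lemma card_filter_sum: "finite A \<Longrightarrow> card {x\<in>A. P x} = (\<Sum>x\<in>A. if P x then 1 else 0)"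
  by (simp add: sum.If_cases Int_def)

lemma inv_count_formula:
  assumes "T \<subseteq> {0..<4}" "U \<subseteq> {0..<4}"
  shows "inv_count T U = (\<Sum>i\<in>{0,1,2,3::nat}. \<Sum>j\<in>{0,1,2,3::nat}. if i \<in> T \<and> j \<in> U \<and> j < i then 1 else 0)"
proof -
  have e: "{(i, j). i \<in> T \<and> j \<in> U \<and> j < i} = {x\<in>{0,1,2,3::nat} \<times> {0,1,2,3::nat}. fst x \<in> T \<and> snd x \<in> U \<and> snd x < fst x}"
  proof -
    have h: "{0..<4::nat} = {0,1,2,3}" by auto
    have T': "T \<subseteq> {0,1,2,3}" and U': "U \<subseteq> {0,1,2,3}" using assms h by simp_all
    show ?thesis
    proof (rule set_eqI)
      fix x :: "nat \<times> nat"
      obtain i j where x: "x = (i, j)" by (cases x)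
      show "x \<in> {(i, j). i \<in> T \<and> j \<in> U \<and> j < i} \<longleftrightarrow> x \<in> {x\<in>{0,1,2,3::nat} \<times> {0,1,2,3::nat}. fst x \<in> T \<and> snd x \<in> U \<and> snd x < fst x}"
        unfolding x using subsetD[OF T', of i] subsetD[OF U', of j]
        by (simp only: mem_Collect_eq prod.case fst_conv snd_conv mem_Times_iff) blast
    qed
  qed
  have fin: "finite ({0,1,2,3::nat} \<times> {0,1,2,3::nat})" by simp
  show ?thesis unfolding inv_count_def e
    apply (subst card_filter_sum[OF fin])
    apply (simp only: sum.cartesian_product)
    apply (rule sum.cong[OF refl])
    apply (simp add: split_beta)
    done
qed

lemma inv_count_bs [simp]: "inv_count (bs a0 a1 a2 a3) (bs c0 c1 c2 c3) =
   (of_bool (a1 \<and> c0)) + (of_bool (a2 \<and> c0) + of_bool (a2 \<and> c1)) + (of_bool (a3 \<and> c0) + of_bool (a3 \<and> c1) + of_bool (a3 \<and> c2))"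
  by (subst inv_count_formula) simp_all

lemma mult_mon_left:
  "(mon T p *\<^sub>s w) S = (if S \<subseteq> {0..<4} \<and> T \<subseteq> S then (-1) ^ inv_count T (S - T) * p * w (S - T) else 0)"
proof (cases "S \<subseteq> {0..<4}")
  case True
  then have fin: "finite (Pow S)" by (simp add: finite_subset)
  have "(mon T p *\<^sub>s w) S = (\<Sum>T'\<in>Pow S. if T' = T then (-1) ^ inv_count T' (S - T') * p * w (S - T') else 0)"
    using True unfolding sc_mult_def mon_def by (simp, intro sum.cong) auto
  also have "\<dots> = (if T \<in> Pow S then (-1) ^ inv_count T (S - T) * p * w (S - T) else 0)"
    using fin by (simp add: sum.delta')
  finally show ?thesis using True by simp
qed (simp add: sc_mult_def)

lemma mult_mon_right:
  "(w *\<^sub>s mon T p) S = (if S \<subseteq> {0..<4} \<and> T \<subseteq> S then (-1) ^ inv_count (S - T) T * w (S - T) * p else 0)"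
proof (cases "S \<subseteq> {0..<4}")
  case True
  then have fin: "finite (Pow S)" by (simp add: finite_subset)
  have "(w *\<^sub>s mon T p) S = (\<Sum>T'\<in>Pow S. if T' = S - T \<and> T \<subseteq> S then (-1) ^ inv_count T' (S - T') * w T' * p else 0)"
    using True unfolding sc_mult_def mon_def
    apply simp
    apply (rule sum.cong[OF refl])
    apply auto
    done
  also have "\<dots> = (if T \<subseteq> S then (-1) ^ inv_count (S - T) T * w (S - T) * p else 0)"
    using fin by (cases "T \<subseteq> S") (simp_all add: sum.delta' double_diff)
  finally show ?thesis using True by simp
qed (simp add: sc_mult_def)

lemma sc_even_mon: "sc_even p = mon {} p" by (simp add: sc_even_def mon_def fun_eq_iff)
lemma sc_x_mon: "sc_x i = mon {} (Xvar i)" by (simp add: sc_x_def sc_even_mon)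
lemma sc_y_mon: "sc_y i = mon {i} 1" by (simp add: sc_y_def mon_def fun_eq_iff)
lemma empty_bs: "{} = bs False False False False" by auto
lemma single_bs0: "{0} = bs True False False False" by auto
lemma single_bs1: "{1} = bs False True False False" by auto
lemma single_bs2: "{2} = bs False False True False" by auto
lemma single_bs3: "{3} = bs False False False True" by auto

lemma mon_bs [simp]: "mon (bs a0 a1 a2 a3) p (bs c0 c1 c2 c3) = (if a0 = c0 \<and> a1 = c1 \<and> a2 = c2 \<and> a3 = c3 then p else 0)"
  by (auto simp: mon_def)

lemma sc_ext: "(\<And>a0 a1 a2 a3. f (bs a0 a1 a2 a3) = g (bs a0 a1 a2 a3)) \<Longrightarrow> (\<And>S. \<not> S \<subseteq> {0..<4} \<Longrightarrow> f S = g S) \<Longrightarrow> f = g"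
  by (metis bs_enum ext)

lemma bool4_cases: "(\<And>a0 a1 a2 a3. P a0 a1 a2 a3) \<Longrightarrow> P a0 a1 a2 a3" by simp

lemma mon_out: "\<not> S \<subseteq> {0..<4} \<Longrightarrow> mon (bs a0 a1 a2 a3) p S = 0"
  by (auto simp: mon_def)

lemma mult_out: "\<not> S \<subseteq> {0..<4} \<Longrightarrow> (u *\<^sub>s v) S = 0" by (simp add: sc_mult_def)

lemma add_distR: "(u +\<^sub>s v) *\<^sub>s w = u *\<^sub>s w +\<^sub>s v *\<^sub>s w"
  by (simp add: sc_mult_def sc_add_def fun_eq_iff sum.distrib algebra_simps)
lemma add_distL: "w *\<^sub>s (u +\<^sub>s v) = w *\<^sub>s u +\<^sub>s w *\<^sub>s v"
  by (simp add: sc_mult_def sc_add_def fun_eq_iff sum.distrib algebra_simps)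
lemma sub_distR: "(u -\<^sub>s v) *\<^sub>s w = u *\<^sub>s w -\<^sub>s v *\<^sub>s w"
  by (simp add: sc_mult_def sc_sub_def fun_eq_iff sum_subtractf algebra_simps)
lemma sub_distL: "w *\<^sub>s (u -\<^sub>s v) = w *\<^sub>s u -\<^sub>s w *\<^sub>s v"
  by (simp add: sc_mult_def sc_sub_def fun_eq_iff sum_subtractf algebra_simps)

lemma sc_y0: "sc_y 0 = mon (bs True False False False) 1" unfolding sc_y_mon single_bs0 ..
lemma sc_y1: "sc_y 1 = mon (bs False True False False) 1" unfolding sc_y_mon single_bs1 ..
lemma sc_y2: "sc_y 2 = mon (bs False False True False) 1" unfolding sc_y_mon single_bs2 ..
lemma sc_y3: "sc_y 3 = mon (bs False False False True) 1" unfolding sc_y_mon single_bs3 ..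
lemma sc_y1': "sc_y (Suc 0) = mon (bs False True False False) 1" using sc_y1 by simp
lemma sc_x_bs: "sc_x i = mon {} (Xvar i)" by (simp add: sc_x_mon)
lemma sc_even_bs: "sc_even p = mon {} p" by (simp add: sc_even_mon)
lemma bs_empty [simp]: "bs False False False False = {}" by auto
lemma mon_e1 [simp]: "mon {} p (bs c0 c1 c2 c3) = (if \<not> c0 \<and> \<not> c1 \<and> \<not> c2 \<and> \<not> c3 then p else 0)"
  using mon_bs[of False False False False p c0 c1 c2 c3] by simp
lemma mon_e2 [simp]: "mon (bs c0 c1 c2 c3) p {} = (if \<not> c0 \<and> \<not> c1 \<and> \<not> c2 \<and> \<not> c3 then p else 0)"
  using mon_bs[of c0 c1 c2 c3 p False False False False] by simp
lemma bs_eq_e1 [simp]: "bs c0 c1 c2 c3 = {} \<longleftrightarrow> \<not> c0 \<and> \<not> c1 \<and> \<not> c2 \<and> \<not> c3"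
  using bs_eq[of c0 c1 c2 c3 False False False False] by simp
lemma bs_eq_e2 [simp]: "{} = bs c0 c1 c2 c3 \<longleftrightarrow> \<not> c0 \<and> \<not> c1 \<and> \<not> c2 \<and> \<not> c3"
  using bs_eq[of False False False False c0 c1 c2 c3] by simp
lemma mon_e3 [simp]: "mon {} p {} = p" by (simp add: mon_def)
lemma inv_e1 [simp]: "inv_count {} U = 0" by (simp add: inv_count_def)
lemma inv_e2 [simp]: "inv_count T {} = 0" by (simp add: inv_count_def)
lemma bs_sub_e [simp]: "bs c0 c1 c2 c3 \<subseteq> {} \<longleftrightarrow> \<not> c0 \<and> \<not> c1 \<and> \<not> c2 \<and> \<not> c3"
  using bs_subset[of c0 c1 c2 c3 False False False False] by simp

lemmas ev = mult_mon_left mult_mon_right sc_add_def sc_sub_def sc_neg_def sc_y0 sc_y1 sc_y1' sc_y2 sc_y3 sc_x_bs sc_even_bs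

abbreviation "uu \<equiv> Xvar 2 - Xvar 0"
abbreviation "vv \<equiv> Xvar 3 - Xvar 1"

lemma W1: "sc_y 2 *\<^sub>s (sc_x 3 -\<^sub>s sc_x 1) -\<^sub>s sc_y 3 *\<^sub>s (sc_x 2 -\<^sub>s sc_x 0) = mon (bs False False True False) vv +\<^sub>s mon (bs False False False True) (- uu :: 'k::comm_ring_1 mpoly)"
  apply (rule sc_ext)
   apply (case_tac a0; case_tac a1; case_tac a2; case_tac a3)
                  apply (simp_all add: ev mult_out mon_out)
  done

lemma y01: "sc_y 0 *\<^sub>s sc_y 1 = mon (bs True True False False) (1::'k::comm_ring_1 mpoly)"
  apply (rule sc_ext)
   apply (case_tac a0; case_tac a1; case_tac a2; case_tac a3)
                  apply (simp_all add: ev mult_out mon_out)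
  done


lemma W0: "sc_y 0 *\<^sub>s (sc_x 3 -\<^sub>s sc_x 1) -\<^sub>s sc_y 1 *\<^sub>s (sc_x 2 -\<^sub>s sc_x 0) = mon (bs True False False False) vv +\<^sub>s mon (bs False True False False) (- uu :: 'k::comm_ring_1 mpoly)"
  apply (rule sc_ext)
   apply (case_tac a0; case_tac a1; case_tac a2; case_tac a3)
                  apply (simp_all add: ev mult_out mon_out)
  done

lemma y23: "sc_y 2 *\<^sub>s sc_y 3 = mon (bs False False True True) (1::'k::comm_ring_1 mpoly)"
  apply (rule sc_ext)
   apply (case_tac a0; case_tac a1; case_tac a2; case_tac a3)
                  apply (simp_all add: ev mult_out mon_out)
  done

lemma h1_eq: "(h1::'k::comm_ring_1 sc) = mon (bs True True True True) 1"
  unfolding h1_def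
  apply (rule sc_ext)
   apply (case_tac a0; case_tac a1; case_tac a2; case_tac a3)
                  apply (simp_all add: ev mult_out mon_out)
  done

lemma h2_eq: "(h2::'k::comm_ring_1 sc) = mon (bs True True True False) vv +\<^sub>s mon (bs True True False True) (- uu)"
  unfolding h2_def y01 W1
  apply (rule sc_ext)
   apply (case_tac a0; case_tac a1; case_tac a2; case_tac a3)
                  apply (simp_all add: ev mult_out mon_out)
  done

lemma h3_eq: "(h3::'k::comm_ring_1 sc) = mon (bs True False True True) vv +\<^sub>s mon (bs False True True True) (- uu)"
  unfolding h3_def y23 W0
  apply (rule sc_ext)
   apply (case_tac a0; case_tac a1; case_tac a2; case_tac a3)
                  apply (simp_all add: ev mult_out mon_out)
  done

lemma h4_eq: "(h4::'k::comm_ring_1 sc) = mon (bs True False True False) (- (vv * vv)) +\<^sub>s mon (bs False True True False) (uu * vv)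
   +\<^sub>s mon (bs True False False True) (uu * vv) +\<^sub>s mon (bs False True False True) (- (uu * uu))"
  unfolding h4_def W1 W0 add_distR
  apply (rule sc_ext)
   apply (case_tac a0; case_tac a1; case_tac a2; case_tac a3)
                  apply (simp_all add: ev mult_out mon_out algebra_simps)
  done


definition good :: "'k::comm_ring_1 sc \<Rightarrow> nat \<Rightarrow> bool" where
  "good u k \<longleftrightarrow> (\<forall>S. u S \<noteq> 0 \<longrightarrow> S \<subseteq> {0..<4} \<and> card S mod 2 = k)"

lemma good_mon: "T \<subseteq> {0..<4} \<Longrightarrow> card T mod 2 = k \<Longrightarrow> good (mon T p) k"
  by (simp add: good_def mon_def)

lemma good_add: "good u k \<Longrightarrow> good v k \<Longrightarrow> good (u +\<^sub>s v) k"
  unfolding good_def sc_add_def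
proof (intro allI impI)
  fix S assume g: "\<forall>S. u S \<noteq> 0 \<longrightarrow> S \<subseteq> {0..<4} \<and> card S mod 2 = k" "\<forall>S. v S \<noteq> 0 \<longrightarrow> S \<subseteq> {0..<4} \<and> card S mod 2 = k"
    and "u S + v S \<noteq> 0"
  then have "u S \<noteq> 0 \<or> v S \<noteq> 0" by auto
  then show "S \<subseteq> {0..<4} \<and> card S mod 2 = k" using g by blast
qed

lemma good_mult: assumes "good u k" "good v l" shows "good (u *\<^sub>s v) ((k + l) mod 2)"
  unfolding good_def
proof (intro allI impI)
  fix S assume h: "(u *\<^sub>s v) S \<noteq> 0"
  then have S: "S \<subseteq> {0..<4}" by (auto simp: sc_mult_def split: if_splits)
  with h have "(\<Sum>T\<in>Pow S. (-1) ^ inv_count T (S - T) * u T * v (S - T)) \<noteq> 0"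
    by (simp add: sc_mult_def)
  then obtain T where T: "T \<in> Pow S" and nz: "(-1) ^ inv_count T (S - T) * u T * v (S - T) \<noteq> 0"
    by (rule sum.not_neutral_contains_not_neutral)
  from nz have "u T \<noteq> 0" "v (S - T) \<noteq> 0" by auto
  then have "card T mod 2 = k" "card (S - T) mod 2 = l" using assms unfolding good_def by auto
  moreover have fS: "finite S" using S finite_subset by blast
  have TS: "T \<subseteq> S" using T by simp
  have fT: "finite T" using fS TS finite_subset by blast
  have "card (S - T) = card S - card T" using TS fT by (simp add: card_Diff_subset)
  moreover have "card T \<le> card S" using TS fS by (simp add: card_mono)
  ultimately have "card S = card T + card (S - T)" by simp
  moreover note \<open>card T mod 2 = k\<close> \<open>card (S - T) mod 2 = l\<close>
  ultimately show "S \<subseteq> {0..<4} \<and> card S mod 2 = (k + l) mod 2" using S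
    by (metis mod_add_eq)
qed


lemma good_m00: "good u 0 \<Longrightarrow> good v 0 \<Longrightarrow> good (u *\<^sub>s v) 0" using good_mult[of u 0 v 0] by simp
lemma good_m11: "good u (Suc 0) \<Longrightarrow> good v (Suc 0) \<Longrightarrow> good (u *\<^sub>s v) 0" using good_mult[of u 1 v 1] by simp
lemma good_m01: "good u 0 \<Longrightarrow> good v (Suc 0) \<Longrightarrow> good (u *\<^sub>s v) (Suc 0)" using good_mult[of u 0 v 1] by simp
lemma good_m10: "good u (Suc 0) \<Longrightarrow> good v 0 \<Longrightarrow> good (u *\<^sub>s v) (Suc 0)" using good_mult[of u 1 v 0] by simp

lemma good_zero: "good sc_zero k" by (simp add: good_def sc_zero_def)

lemma genF_good: "A \<in> genF \<Longrightarrow> (case A of (a, b, c, d) \<Rightarrow> good a 0 \<and> good b 1 \<and> good c 1 \<and> good d 0)"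
proof (induction rule: genF.induct)
  case (scalar k)
  have "good (sc_even (Kconst k) :: 'a sc) 0" unfolding sc_even_bs by (rule good_mon) auto
  then show ?case by (simp add: mat_scalar_def good_zero)
next
  case gen1
  have "good (x1 :: 'a sc) 0" "good (x1' :: 'a sc) 0" unfolding sc_x_bs by (rule good_mon, auto)+
  moreover have "good (y1 :: 'a sc) 1" unfolding sc_y0 by (rule good_mon) auto
  moreover have "good (y1' :: 'a sc) 1" unfolding sc_y2 by (rule good_mon) auto
  ultimately show ?case by (simp add: C1_def)
next
  case gen2
  have "good (x2 :: 'a sc) 0" "good (x2' :: 'a sc) 0" unfolding sc_x_bs by (rule good_mon, auto)+
  moreover have "good (y2 :: 'a sc) 1" unfolding sc_y1 by (rule good_mon) auto
  moreover have "good (y2' :: 'a sc) 1" unfolding sc_y3 by (rule good_mon) auto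
  ultimately show ?case by (simp add: C2_def)
next
  case (add A B)
  then show ?case by (cases A rule: prod_cases4; cases B rule: prod_cases4) (auto intro: good_add)
next
  case (mult A B)
  then show ?case
    by (cases A rule: prod_cases4; cases B rule: prod_cases4) (simp, intro conjI good_add; blast intro: good_m00 good_m11 good_m01 good_m10)
qed


lemma Xvar_eq_iff [simp]: "(Xvar i = (Xvar j :: 'k::comm_ring_1 mpoly)) \<longleftrightarrow> i = j"
  using Xvar_inj by blast

lemma zero_of_good: "good u k \<Longrightarrow> card S mod 2 \<noteq> k \<Longrightarrow> u S = 0"
  by (auto simp: good_def)

lemma out_of_good: "good u k \<Longrightarrow> \<not> S \<subseteq> {0..<4} \<Longrightarrow> u S = 0"
  by (auto simp: good_def)

lemma uu_nz: "(uu :: 'k::field mpoly) \<noteq> 0" by simp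
lemma vv_nz: "(vv :: 'k::field mpoly) \<noteq> 0" by simp

lemma fwd:
  fixes a b c d :: "'k::field sc"
  assumes ga: "good a 0" and gb: "good b (Suc 0)" and gc: "good c (Suc 0)" and gd: "good d 0"
  and E1: "mat_mult (a,b,c,d) C1 = mat_mult C1 (a,b,c,d)" and E2: "mat_mult (a,b,c,d) C2 = mat_mult C2 (a,b,c,d)"
  shows "\<exists>f1 f4 :: 'k mpoly.
            b = sc_even f4 *\<^sub>s h2 \<and>
            c = -\<^sub>s (sc_even f4 *\<^sub>s h3) \<and>
            d = a +\<^sub>s sc_even f1 *\<^sub>s h1 +\<^sub>s sc_even f4 *\<^sub>s h4"
proof -
  note z = zero_of_good[OF ga] zero_of_good[OF gb] zero_of_good[OF gc] zero_of_good[OF gd]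
  note o = out_of_good[OF ga] out_of_good[OF gb] out_of_good[OF gc] out_of_good[OF gd]
  have A: "a *\<^sub>s x1 +\<^sub>s b *\<^sub>s y1' = x1 *\<^sub>s a +\<^sub>s y1 *\<^sub>s c"
     "a *\<^sub>s y1 +\<^sub>s b *\<^sub>s x1' = x1 *\<^sub>s b +\<^sub>s y1 *\<^sub>s d"
     "c *\<^sub>s x1 +\<^sub>s d *\<^sub>s y1' = y1' *\<^sub>s a +\<^sub>s x1' *\<^sub>s c"
     "c *\<^sub>s y1 +\<^sub>s d *\<^sub>s x1' = y1' *\<^sub>s b +\<^sub>s x1' *\<^sub>s d" using E1 by (simp_all add: C1_def)
  have B: "a *\<^sub>s x2 +\<^sub>s b *\<^sub>s y2' = x2 *\<^sub>s a +\<^sub>s y2 *\<^sub>s c"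
     "a *\<^sub>s y2 +\<^sub>s b *\<^sub>s x2' = x2 *\<^sub>s b +\<^sub>s y2 *\<^sub>s d"
     "c *\<^sub>s x2 +\<^sub>s d *\<^sub>s y2' = y2' *\<^sub>s a +\<^sub>s x2' *\<^sub>s c"
     "c *\<^sub>s y2 +\<^sub>s d *\<^sub>s x2' = y2' *\<^sub>s b +\<^sub>s x2' *\<^sub>s d" using E2 by (simp_all add: C2_def)
  have b1: "b (bs False True False False) = 0" using A(1)[THEN fun_cong, of "bs False True True False"] by (simp add: ev z)
  have b2: "b (bs False False False True) = 0" using A(1)[THEN fun_cong, of "bs False False True True"] by (simp add: ev z)
  have b3: "b (bs True False False False) = 0" using B(1)[THEN fun_cong, of "bs True False False True"] by (simp add: ev z)
  have b4: "b (bs False False True False) = 0" using B(1)[THEN fun_cong, of "bs False False True True"] by (simp add: ev z)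
  have b5: "b (bs False True True True) = 0" using A(2)[THEN fun_cong, of "bs False True True True"] by (simp add: ev z)
  have b6: "b (bs True False True True) = 0" using B(2)[THEN fun_cong, of "bs True False True True"] by (simp add: ev z)
  have c1: "c (bs False True False False) = 0" using A(1)[THEN fun_cong, of "bs True True False False"] by (simp add: ev z)
  have c2: "c (bs False False False True) = 0" using A(1)[THEN fun_cong, of "bs True False False True"] by (simp add: ev z)
  have c3: "c (bs True False False False) = 0" using B(1)[THEN fun_cong, of "bs True True False False"] by (simp add: ev z)
  have c4: "c (bs False False True False) = 0" using B(1)[THEN fun_cong, of "bs False True True False"] by (simp add: ev z)
  have c5: "c (bs True True False True) = 0" using A(3)[THEN fun_cong, of "bs True True False True"] by (simp add: ev z)
  have c6: "c (bs True True True False) = 0" using B(3)[THEN fun_cong, of "bs True True True False"] by (simp add: ev z)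
  define \<beta>2 where "\<beta>2 = b (bs True True True False)"
  define \<beta>3 where "\<beta>3 = b (bs True True False True)"
  define \<gamma>0 where "\<gamma>0 = c (bs True False True True)"
  define \<gamma>1 where "\<gamma>1 = c (bs False True True True)"
  have r327: "a (bs False True True False) + \<beta>2 * Xvar 2 = Xvar 0 * \<beta>2 + d (bs False True True False)"
    using A(2)[THEN fun_cong, of "bs True True True False"] by (simp add: ev z \<beta>2_def)
  have r328: "a (bs False True False True) + \<beta>3 * Xvar 2 = Xvar 0 * \<beta>3 + d (bs False True False True)"
    using A(2)[THEN fun_cong, of "bs True True False True"] by (simp add: ev z \<beta>3_def)
  have r330: "a (bs False False True True) = d (bs False False True True)"
    using A(2)[THEN fun_cong, of "bs True False True True"] by (simp add: ev z b6)
  have r333: "a {} = d {}"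
    using A(2)[THEN fun_cong, of "bs True False False False"] by (simp add: ev z b3)
  have r343: "a (bs True True False False) = d (bs True True False False)"
    using A(3)[THEN fun_cong, of "bs True True True False"] by (simp add: ev z c6)
  have r346: "\<gamma>0 * Xvar 0 - d (bs True False False True) = Xvar 2 * \<gamma>0 - a (bs True False False True)"
    using A(3)[THEN fun_cong, of "bs True False True True"] by (simp add: ev z \<gamma>0_def)
  have r350: "\<gamma>1 * Xvar 0 - d (bs False True False True) = Xvar 2 * \<gamma>1 - a (bs False True False True)"
    using A(3)[THEN fun_cong, of "bs False True True True"] by (simp add: ev z \<gamma>1_def)
  have r391: "\<beta>2 * Xvar 3 - a (bs True False True False) = Xvar 1 * \<beta>2 - d (bs True False True False)"
    using B(2)[THEN fun_cong, of "bs True True True False"] by (simp add: ev z \<beta>2_def)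
  have r392: "\<beta>3 * Xvar 3 - a (bs True False False True) = Xvar 1 * \<beta>3 - d (bs True False False True)"
    using B(2)[THEN fun_cong, of "bs True True False True"] by (simp add: ev z \<beta>3_def)
  have r410: "\<gamma>0 * Xvar 1 + d (bs True False True False) = a (bs True False True False) + Xvar 3 * \<gamma>0"
    using B(3)[THEN fun_cong, of "bs True False True True"] by (simp add: ev z \<gamma>0_def)
  have r414: "\<gamma>1 * Xvar 1 + d (bs False True True False) = a (bs False True True False) + Xvar 3 * \<gamma>1"
    using B(3)[THEN fun_cong, of "bs False True True True"] by (simp add: ev z \<gamma>1_def)
  have "(\<beta>3 + \<gamma>1) * uu = 0" using r328 r350 by algebra
  then have g1: "\<gamma>1 = - \<beta>3" by (simp add: eq_neg_iff_add_eq_0 add.commute)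
  have "(\<beta>2 + \<gamma>0) * vv = 0" using r391 r410 by algebra
  then have g0: "\<gamma>0 = - \<beta>2" by (simp add: eq_neg_iff_add_eq_0 add.commute)
  have "\<beta>2 * uu = \<gamma>1 * vv" using r327 r414 by algebra
  then obtain f where f1: "\<beta>2 = vv * f" and f2: "\<gamma>1 = uu * f" using divis by blast
  define f1 where "f1 = d (bs True True True True) - a (bs True True True True)"
  have bb1: "b (bs True True True False) = vv * f" using f1 \<beta>2_def by simp
  have bb2: "b (bs True True False True) = - (uu * f)" using f2 g1 \<beta>3_def by (metis minus_minus)
  have cc1: "c (bs True False True True) = - (vv * f)" using f1 g0 \<gamma>0_def by simp
  have cc2: "c (bs False True True True) = uu * f" using f2 \<gamma>1_def by simp
  have d1: "d (bs False True True False) = a (bs False True True False) + uu * vv * f"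
    using r327 f1 by algebra
  have d2: "d (bs False True False True) = a (bs False True False True) - uu * uu * f"
    using r328 f2 g1 by algebra
  have d3: "d (bs True False True False) = a (bs True False True False) - vv * vv * f"
    using r391 f1 by algebra
  have d4: "d (bs True False False True) = a (bs True False False True) + uu * vv * f"
    using r392 f2 g1 by algebra
  have d5: "d (bs True True True True) = a (bs True True True True) + f1" by (simp add: f1_def)
  have "b = sc_even f *\<^sub>s h2"
    unfolding h2_eq
    apply (rule sc_ext)
     apply (case_tac a0; case_tac a1; case_tac a2; case_tac a3)
                    apply (simp_all add: ev z o mult_out b1 b2 b3 b4 b5 b6 bb1 bb2 algebra_simps)
    done
  moreover have "c = -\<^sub>s (sc_even f *\<^sub>s h3)"
    unfolding h3_eq
    apply (rule sc_ext)
     apply (case_tac a0; case_tac a1; case_tac a2; case_tac a3)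
                    apply (simp_all add: ev z o mult_out c1 c2 c3 c4 c5 c6 cc1 cc2 algebra_simps)
    done
  moreover have "d = a +\<^sub>s sc_even f1 *\<^sub>s h1 +\<^sub>s sc_even f *\<^sub>s h4"
    unfolding h1_eq h4_eq
    apply (rule sc_ext)
     apply (case_tac a0; case_tac a1; case_tac a2; case_tac a3)
                    apply (simp_all add: ev z o mult_out d1 d2 d3 d4 d5 r330[symmetric] r333[symmetric] r343[symmetric] algebra_simps)
    done
  ultimately show ?thesis by blast
qed


lemma bwd:
  fixes a :: "'k::field sc"
  assumes ga: "good a 0"
  shows "mat_mult (a, sc_even f4 *\<^sub>s h2, -\<^sub>s (sc_even f4 *\<^sub>s h3), a +\<^sub>s sc_even f1 *\<^sub>s h1 +\<^sub>s sc_even f4 *\<^sub>s h4) C1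
       = mat_mult C1 (a, sc_even f4 *\<^sub>s h2, -\<^sub>s (sc_even f4 *\<^sub>s h3), a +\<^sub>s sc_even f1 *\<^sub>s h1 +\<^sub>s sc_even f4 *\<^sub>s h4) \<and>
         mat_mult (a, sc_even f4 *\<^sub>s h2, -\<^sub>s (sc_even f4 *\<^sub>s h3), a +\<^sub>s sc_even f1 *\<^sub>s h1 +\<^sub>s sc_even f4 *\<^sub>s h4) C2
       = mat_mult C2 (a, sc_even f4 *\<^sub>s h2, -\<^sub>s (sc_even f4 *\<^sub>s h3), a +\<^sub>s sc_even f1 *\<^sub>s h1 +\<^sub>s sc_even f4 *\<^sub>s h4)"
proof -
  note z = zero_of_good[OF ga] out_of_good[OF ga]
  show ?thesis
    unfolding h1_eq h2_eq h3_eq h4_eq C1_def C2_def mat_mult.simps prod.inject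
    apply (intro conjI)
                   apply (rule sc_ext,
      (case_tac a0; case_tac a1; case_tac a2; case_tac a3),
      (simp_all add: ev z mult_out algebra_simps))+
    done
qed

theorem corollary1:
  fixes a b c d :: "'k::field sc"
  assumes "infinite (UNIV :: 'k set)"
    and "(2::'k) \<noteq> 0"
    and "(a, b, c, d) \<in> genF"
  shows "(mat_mult (a, b, c, d) C1 = mat_mult C1 (a, b, c, d) \<and>
          mat_mult (a, b, c, d) C2 = mat_mult C2 (a, b, c, d))
         \<longleftrightarrow>
         (\<exists>f1 f4 :: 'k mpoly.
            b = sc_even f4 *\<^sub>s h2 \<and>
            c = -\<^sub>s (sc_even f4 *\<^sub>s h3) \<and>
            d = a +\<^sub>s sc_even f1 *\<^sub>s h1 +\<^sub>s sc_even f4 *\<^sub>s h4)"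
proof -
  have g: "good a 0" "good b (Suc 0)" "good c (Suc 0)" "good d 0"
    using genF_good[OF assms(3)] by simp_all
  show ?thesis
  proof
    assume "mat_mult (a, b, c, d) C1 = mat_mult C1 (a, b, c, d) \<and>
          mat_mult (a, b, c, d) C2 = mat_mult C2 (a, b, c, d)"
    then show "\<exists>f1 f4 :: 'k mpoly.
            b = sc_even f4 *\<^sub>s h2 \<and>
            c = -\<^sub>s (sc_even f4 *\<^sub>s h3) \<and>
            d = a +\<^sub>s sc_even f1 *\<^sub>s h1 +\<^sub>s sc_even f4 *\<^sub>s h4"
      using fwd[OF g] by blast
  next
    assume "\<exists>f1 f4 :: 'k mpoly.
            b = sc_even f4 *\<^sub>s h2 \<and>
            c = -\<^sub>s (sc_even f4 *\<^sub>s h3) \<and>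
            d = a +\<^sub>s sc_even f1 *\<^sub>s h1 +\<^sub>s sc_even f4 *\<^sub>s h4"
    then obtain f1 f4 :: "'k mpoly" where "b = sc_even f4 *\<^sub>s h2"
            "c = -\<^sub>s (sc_even f4 *\<^sub>s h3)"
            "d = a +\<^sub>s sc_even f1 *\<^sub>s h1 +\<^sub>s sc_even f4 *\<^sub>s h4" by blast
    then show "mat_mult (a, b, c, d) C1 = mat_mult C1 (a, b, c, d) \<and>
          mat_mult (a, b, c, d) C2 = mat_mult C2 (a, b, c, d)"
      using bwd[OF g(1)] by simp
  qed
qed

end
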